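(* Let $\mathbf{A}=(\mathcal{P},\mathcal{L},\parallel)$ and $\mathbf{A}'=(\mathcal{P}',\mathcal{L}',\parallel')$ be affine spaces with $\dim\mathbf{A}'\ge 3$. Suppose that $\varphi:\mathcal{L}\to\mathcal{L}'$ is a bijection satisfying $$a\sim b\implies a^\varphi\sim' b^\varphi\quad\text{for all }a,b\in\mathcal{L}.$$ Then $$\lambda:\mathcal{P}\to\mathcal{P}',\qquad a\cap b\mapsto a^\varphi\cap b^\varphi\quad(a,b\in\mathcal{L},\ a\approx b)$$ is a well-defined injection that maps collinear triples of points to collinear triples and non-collinear triples to non-collinear triples. Moreover, $\mathcal{L}(Q)^\varphi=\mathcal{L}'(Q^\lambda)$ for all $Q\in\mathcal{P}$.
   Context: An affine space $\mathbf{A}=(\mathcal{P},\mathcal{L},\parallel)$ has point set $\mathcal{P}$, line set $\mathcal{L}$ (lines viewed as subsets of $\mathcal{P}$) and parallelism $\parallel$. Two lines $a,b$ are related, $a\sim b$, if $a\cap b\neq\emptyset$; adjacent, $a\approx b$, if $a\sim b$ and $a\ne b$; analogously $\sim'$ in $\mathbf{A}'$. For a point $Q\in\mathcal{P}$, $\mathcal{L}(Q)$ denotes the star of lines with centre $Q$, i.e. the set of all lines of $\mathbf{A}$ through $Q$; similarly $\mathcal{L}'(Q')$ in $\mathbf{A}'$. Images are written $x^\varphi$, and $\mathcal{L}(Q)^\varphi=\{x^\varphi: x\in\mathcal{L}(Q)\}$. *)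

theory Defs
  imports Main
begin

record 'p affine_structure =
  pts :: "'p set"
  lns :: "'p set set"
  par :: "'p set \<Rightarrow> 'p set \<Rightarrow> bool"

definition collinear :: "('p, 'x) affine_structure_scheme \<Rightarrow> 'p \<Rightarrow> 'p \<Rightarrow> 'p \<Rightarrow> bool" where
  "collinear A x y z \<longleftrightarrow> (\<exists>l\<in>lns A. x \<in> l \<and> y \<in> l \<and> z \<in> l)"

text \<open>Affine space: a linear space (every line has at least two points, two distinct
points lie on exactly one line), parallelism an equivalence relation on lines,
the parallel axiom (Euclid) and the triangle axiom (Tamaschke).\<close>

definition affine_space :: "('p, 'x) affine_structure_scheme \<Rightarrow> bool" where
  "affine_space A \<longleftrightarrow>
     (\<forall>l\<in>lns A. l \<subseteq> pts A \<and> (\<exists>x y. x \<in> l \<and> y \<in> l \<and> x \<noteq> y)) \<and>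
     (\<forall>x\<in>pts A. \<forall>y\<in>pts A. x \<noteq> y \<longrightarrow> (\<exists>!l. l \<in> lns A \<and> x \<in> l \<and> y \<in> l)) \<and>
     (\<forall>a b. par A a b \<longrightarrow> a \<in> lns A \<and> b \<in> lns A) \<and>
     (\<forall>a\<in>lns A. par A a a) \<and>
     (\<forall>a b. par A a b \<longrightarrow> par A b a) \<and>
     (\<forall>a b c. par A a b \<longrightarrow> par A b c \<longrightarrow> par A a c) \<and>
     (\<forall>a\<in>lns A. \<forall>q\<in>pts A. \<exists>!m. m \<in> lns A \<and> q \<in> m \<and> par A m a) \<and>
     (\<forall>p q r p' q' a b c a' b' c'.
        p \<in> pts A \<and> q \<in> pts A \<and> r \<in> pts A \<and> p' \<in> pts A \<and> q' \<in> pts A \<and>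
        \<not> collinear A p q r \<and> p' \<noteq> q' \<and>
        a \<in> lns A \<and> p \<in> a \<and> q \<in> a \<and>
        b \<in> lns A \<and> p \<in> b \<and> r \<in> b \<and>
        c \<in> lns A \<and> q \<in> c \<and> r \<in> c \<and>
        a' \<in> lns A \<and> p' \<in> a' \<and> q' \<in> a' \<and> par A a a' \<and>
        b' \<in> lns A \<and> p' \<in> b' \<and> par A b b' \<and>
        c' \<in> lns A \<and> q' \<in> c' \<and> par A c c'
        \<longrightarrow> b' \<inter> c' \<noteq> {})"

definition subspace :: "('p, 'x) affine_structure_scheme \<Rightarrow> 'p set \<Rightarrow> bool" where
  "subspace A S \<longleftrightarrow> S \<subseteq> pts A \<and>
     (\<forall>l\<in>lns A. \<forall>x y. x \<in> l \<and> y \<in> l \<and> x \<in> S \<and> y \<in> S \<and> x \<noteq> y \<longrightarrow> l \<subseteq> S) \<and>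
     (\<forall>l m. l \<subseteq> S \<and> par A l m \<and> m \<inter> S \<noteq> {} \<longrightarrow> m \<subseteq> S)"

definition span :: "('p, 'x) affine_structure_scheme \<Rightarrow> 'p set \<Rightarrow> 'p set" where
  "span A X = \<Inter>{S. subspace A S \<and> X \<subseteq> S}"

text \<open>dim A \<ge> 3: some plane (span of three non-collinear points) is a proper subspace.\<close>

definition dim_ge_3 :: "('p, 'x) affine_structure_scheme \<Rightarrow> bool" where
  "dim_ge_3 A \<longleftrightarrow> (\<exists>p\<in>pts A. \<exists>q\<in>pts A. \<exists>r\<in>pts A. \<exists>s\<in>pts A.
      \<not> collinear A p q r \<and> s \<notin> span A {p, q, r})"

definition star :: "('p, 'x) affine_structure_scheme \<Rightarrow> 'p \<Rightarrow> 'p set set" where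
  "star A Q = {l \<in> lns A. Q \<in> l}"

end

theory Submission imports Defs begin

definition ln :: "('p,'x) affine_structure_scheme \<Rightarrow> 'p \<Rightarrow> 'p \<Rightarrow> 'p set" where
  "ln A x y = (THE l. l \<in> lns A \<and> x \<in> l \<and> y \<in> l)"

definition pl :: "('p,'x) affine_structure_scheme \<Rightarrow> 'p \<Rightarrow> 'p set \<Rightarrow> 'p set" where
  "pl A w l = (THE m. m \<in> lns A \<and> w \<in> m \<and> par A m l)"

definition Pl :: "('p,'x) affine_structure_scheme \<Rightarrow> 'p set \<Rightarrow> 'p set \<Rightarrow> 'p set" where
  "Pl A g h = {w \<in> pts A. pl A w h \<inter> g \<noteq> {}}"

locale aff =
  fixes A :: "('p,'x) affine_structure_scheme"
  assumes ax: "affine_space A"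
begin

lemmas r0 = ax[unfolded affine_space_def]
lemmas r1 = r0[THEN conjunct2]
lemmas r2 = r1[THEN conjunct2]
lemmas r3 = r2[THEN conjunct2]
lemmas r4 = r3[THEN conjunct2]
lemmas r5 = r4[THEN conjunct2]
lemmas r6 = r5[THEN conjunct2]
lemmas axs = r0[THEN conjunct1] r1[THEN conjunct1] r2[THEN conjunct1] r3[THEN conjunct1]
  r4[THEN conjunct1] r5[THEN conjunct1] r6[THEN conjunct1] r6[THEN conjunct2]

lemma line_sub: "l \<in> lns A \<Longrightarrow> l \<subseteq> pts A"
  using axs(1) by blast

lemma line_two: "l \<in> lns A \<Longrightarrow> \<exists>x y. x \<in> l \<and> y \<in> l \<and> x \<noteq> y"
  using axs(1) by blast

lemma uniq: "x \<in> pts A \<Longrightarrow> y \<in> pts A \<Longrightarrow> x \<noteq> y \<Longrightarrow> \<exists>!l. l \<in> lns A \<and> x \<in> l \<and> y \<in> l"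
  using axs(2) by blast

lemma par_lns: "par A a b \<Longrightarrow> a \<in> lns A \<and> b \<in> lns A"
  using axs(3) by blast

lemma par_refl: "a \<in> lns A \<Longrightarrow> par A a a"
  using axs(4) by blast

lemma par_sym: "par A a b \<Longrightarrow> par A b a"
  using axs(5) by blast

lemma par_trans: "par A a b \<Longrightarrow> par A b c \<Longrightarrow> par A a c"
  using axs(6) by blast

lemma euclid: "a \<in> lns A \<Longrightarrow> q \<in> pts A \<Longrightarrow> \<exists>!m. m \<in> lns A \<and> q \<in> m \<and> par A m a"
  using axs(7) by blast

lemma tri_ax:
  assumes "p \<in> pts A" "q \<in> pts A" "r \<in> pts A" "p' \<in> pts A" "q' \<in> pts A"
        "\<not> collinear A p q r" "p' \<noteq> q'"
        "a \<in> lns A" "p \<in> a" "q \<in> a"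
        "b \<in> lns A" "p \<in> b" "r \<in> b"
        "c \<in> lns A" "q \<in> c" "r \<in> c"
        "a' \<in> lns A" "p' \<in> a'" "q' \<in> a'" "par A a a'"
        "b' \<in> lns A" "p' \<in> b'" "par A b b'"
        "c' \<in> lns A" "q' \<in> c'" "par A c c'"
  shows "b' \<inter> c' \<noteq> {}"
  apply (rule axs(8)[rule_format, of p q r p' q' a b c a' b' c'])
  by (intro conjI; rule assms)

lemma two_pts_eq: "l \<in> lns A \<Longrightarrow> m \<in> lns A \<Longrightarrow> x \<in> l \<Longrightarrow> y \<in> l \<Longrightarrow> x \<in> m \<Longrightarrow> y \<in> m \<Longrightarrow> x \<noteq> y \<Longrightarrow> l = m"
  using uniq[of x y] line_sub by blast

lemma ln: "x \<in> pts A \<Longrightarrow> y \<in> pts A \<Longrightarrow> x \<noteq> y \<Longrightarrow> ln A x y \<in> lns A \<and> x \<in> ln A x y \<and> y \<in> ln A x y"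
  unfolding ln_def using theI'[OF uniq] by blast

lemma ln_uniq: "l \<in> lns A \<Longrightarrow> x \<in> l \<Longrightarrow> y \<in> l \<Longrightarrow> x \<noteq> y \<Longrightarrow> ln A x y = l"
  using ln[of x y] line_sub two_pts_eq by blast

lemma ln_sym: "x \<in> pts A \<Longrightarrow> y \<in> pts A \<Longrightarrow> x \<noteq> y \<Longrightarrow> ln A x y = ln A y x"
  using ln[of x y] ln_uniq by metis

lemma pl: "w \<in> pts A \<Longrightarrow> l \<in> lns A \<Longrightarrow> pl A w l \<in> lns A \<and> w \<in> pl A w l \<and> par A (pl A w l) l"
  unfolding pl_def using theI'[OF euclid] by blast

lemma pl_uniq: "m \<in> lns A \<Longrightarrow> w \<in> m \<Longrightarrow> par A m l \<Longrightarrow> pl A w l = m"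
proof -
  assume a: "m \<in> lns A" "w \<in> m" "par A m l"
  have "l \<in> lns A" "w \<in> pts A" using a par_lns line_sub by auto
  then have "\<exists>!m. m \<in> lns A \<and> w \<in> m \<and> par A m l" by (rule euclid)
  then show ?thesis unfolding pl_def by (rule the1_equality) (use a in simp)
qed

lemma par_meet: "par A l m \<Longrightarrow> x \<in> l \<Longrightarrow> x \<in> m \<Longrightarrow> l = m"
  by (metis par_lns par_refl pl_uniq)

lemma pl_par: "par A m l \<Longrightarrow> w \<in> pts A \<Longrightarrow> pl A w m = pl A w l"
  by (metis par_lns par_trans pl pl_uniq)

lemma pl_self: "l \<in> lns A \<Longrightarrow> w \<in> l \<Longrightarrow> pl A w l = l"
  by (simp add: par_refl pl_uniq)

lemma pl_pl: "w \<in> pts A \<Longrightarrow> l \<in> lns A \<Longrightarrow> x \<in> pl A w l \<Longrightarrow> pl A x l = pl A w l"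
  by (simp add: pl pl_uniq)

lemma pl_pl2: "w \<in> pts A \<Longrightarrow> l \<in> lns A \<Longrightarrow> x \<in> pts A \<Longrightarrow> pl A x (pl A w l) = pl A x l"
  by (simp add: pl pl_par)

lemma meet_uniq: "g \<in> lns A \<Longrightarrow> h \<in> lns A \<Longrightarrow> g \<noteq> h \<Longrightarrow> x \<in> g \<Longrightarrow> x \<in> h \<Longrightarrow> y \<in> g \<Longrightarrow> y \<in> h \<Longrightarrow> x = y"
  using two_pts_eq by blast

lemma TA:
  assumes "p \<in> pts A" "q \<in> pts A" "r \<in> pts A" "p' \<in> pts A" "q' \<in> pts A"
    "p \<noteq> q" "r \<notin> ln A p q" "p' \<noteq> q'" "par A (ln A p' q') (ln A p q)"
  shows "pl A p' (ln A p r) \<inter> pl A q' (ln A q r) \<noteq> {}"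
proof -
  have pq: "ln A p q \<in> lns A" "p \<in> ln A p q" "q \<in> ln A p q" using ln assms by auto
  have rp: "r \<noteq> p" "r \<noteq> q" using pq assms by auto
  have nc: "\<not> collinear A p q r"
    unfolding collinear_def using assms pq ln_uniq by metis
  have pr: "ln A p r \<in> lns A" "p \<in> ln A p r" "r \<in> ln A p r" using ln assms rp by auto
  have qr: "ln A q r \<in> lns A" "q \<in> ln A q r" "r \<in> ln A q r" using ln assms rp by auto
  have pq': "ln A p' q' \<in> lns A" "p' \<in> ln A p' q'" "q' \<in> ln A p' q'" using ln assms by auto
  have b1: "pl A p' (ln A p r) \<in> lns A" "p' \<in> pl A p' (ln A p r)" "par A (pl A p' (ln A p r)) (ln A p r)"
    using pl[of p' "ln A p r"] assms pr by auto
  have c1: "pl A q' (ln A q r) \<in> lns A" "q' \<in> pl A q' (ln A q r)" "par A (pl A q' (ln A q r)) (ln A q r)"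
    using pl[of q' "ln A q r"] assms qr by auto
  have s1: "par A (ln A p q) (ln A p' q')" "par A (ln A p r) (pl A p' (ln A p r))" "par A (ln A q r) (pl A q' (ln A q r))"
    using par_sym[OF assms(9)] par_sym[OF b1(3)] par_sym[OF c1(3)] by auto
  show ?thesis
    by (rule tri_ax[of p q r p' q' "ln A p q" "ln A p r" "ln A q r" "ln A p' q'"
       "pl A p' (ln A p r)" "pl A q' (ln A q r)"]) (rule assms nc pq pr qr pq' b1 c1 s1)+
qed


definition cross :: "'p set \<Rightarrow> 'p set \<Rightarrow> 'p \<Rightarrow> bool" where
  "cross g h Or \<longleftrightarrow> g \<in> lns A \<and> h \<in> lns A \<and> g \<noteq> h \<and> Or \<in> g \<and> Or \<in> h"

lemma cross_sym: "cross g h Or \<Longrightarrow> cross h g Or"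
  unfolding cross_def by auto

lemma cross_pts: "cross g h Or \<Longrightarrow> Or \<in> pts A"
  unfolding cross_def using line_sub by auto

lemma Pl_pts: "Pl A g h \<subseteq> pts A"
  unfolding Pl_def by auto

lemma PlI: "w \<in> pts A \<Longrightarrow> u \<in> pl A w h \<Longrightarrow> u \<in> g \<Longrightarrow> w \<in> Pl A g h"
  unfolding Pl_def by auto

lemma PlE: "w \<in> Pl A g h \<Longrightarrow> (\<And>u. w \<in> pts A \<Longrightarrow> u \<in> pl A w h \<Longrightarrow> u \<in> g \<Longrightarrow> thesis) \<Longrightarrow> thesis"
  unfolding Pl_def by auto

lemma g_Pl: "cross g h Or \<Longrightarrow> g \<subseteq> Pl A g h"
  unfolding cross_def using line_sub pl by (blast intro: PlI)

lemma h_Pl: "cross g h Or \<Longrightarrow> h \<subseteq> Pl A g h"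
proof
  fix w assume c: "cross g h Or" and w: "w \<in> h"
  have "pl A w h = h" using c w pl_self unfolding cross_def by auto
  then show "w \<in> Pl A g h" using c w line_sub unfolding cross_def by (auto intro: PlI)
qed

lemma Pl_K:
  assumes c: "cross g h Or" and w: "w \<in> Pl A g h"
  shows "pl A w g \<inter> h \<noteq> {}"
proof -
  have g: "g \<in> lns A" "Or \<in> g" and h: "h \<in> lns A" "Or \<in> h" and gh: "g \<noteq> h"
    using c unfolding cross_def by auto
  have Or: "Or \<in> pts A" using c cross_pts by auto
  obtain u where wp: "w \<in> pts A" and u: "u \<in> pl A w h" "u \<in> g" using w by (rule PlE)
  have plw: "pl A w h \<in> lns A" "w \<in> pl A w h" "par A (pl A w h) h" using pl wp h by auto
  have up: "u \<in> pts A" using u g line_sub by auto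
  show ?thesis
  proof (cases "w \<in> g")
    case True
    then have "pl A w g = g" using pl_self g by auto
    then show ?thesis using g h by auto
  next
    case wg: False
    show ?thesis
    proof (cases "u = Or")
      case True
      then have "pl A w h = h" using par_meet plw u h by auto
      then have "w \<in> h" using plw by auto
      then show ?thesis using pl[OF wp g(1)] by auto
    next
      case uO: False
      have wO: "w \<noteq> Or" using wg g by auto
      have lOu: "ln A Or u = g" using ln_uniq g u uO by auto
      have nu: "u \<notin> ln A Or w"
      proof
        assume "u \<in> ln A Or w"
        then have "ln A Or w = g" using two_pts_eq[of "ln A Or w" g Or u] ln[OF Or wp] wO g u uO by auto
        then show False using ln[OF Or wp] wO wg by auto
      qed
      have wu: "w \<noteq> u" using wg u by auto
      have lwu: "ln A w u = pl A w h" using ln_uniq plw u wu by auto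
      have pp: "par A (ln A w Or) (ln A Or w)" using ln_sym[OF Or wp] wO par_refl ln[OF Or wp] by auto
      have "pl A w (ln A Or u) \<inter> pl A Or (ln A w u) \<noteq> {}"
        using TA[OF Or wp up wp Or _ nu _ pp] wO by auto
      moreover have "pl A Or (ln A w u) = h" using lwu pl_pl2[OF wp h(1) Or] pl_self h by auto
      ultimately show ?thesis using lOu by auto
    qed
  qed
qed

lemma Pl_sym: "cross g h Or \<Longrightarrow> Pl A g h = Pl A h g"
proof -
  assume c: "cross g h Or"
  have "Pl A g h \<subseteq> Pl A h g" using Pl_K[OF c] Pl_pts unfolding Pl_def by auto
  moreover have "Pl A h g \<subseteq> Pl A g h" using Pl_K[OF cross_sym[OF c]] Pl_pts unfolding Pl_def by auto
  ultimately show ?thesis by auto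
qed


lemma PG:
  assumes c: "cross g h Or" and u: "u \<in> g" and v: "v \<in> h"
  shows "pl A u h \<inter> pl A v g \<noteq> {}"
proof -
  have g: "g \<in> lns A" "Or \<in> g" and h: "h \<in> lns A" "Or \<in> h" and gh: "g \<noteq> h"
    using c unfolding cross_def by auto
  have O: "Or \<in> pts A" using c cross_pts by auto
  have up: "u \<in> pts A" and vp: "v \<in> pts A" using u v g h line_sub by auto
  show ?thesis
  proof (cases "u = Or")
    case True
    then have "pl A u h = h" using pl_self h by auto
    then show ?thesis using v pl[OF vp g(1)] by auto
  next
    case uO: False
    show ?thesis
    proof (cases "v = Or")
      case True
      then have "pl A v g = g" using pl_self g by auto
      then show ?thesis using u pl[OF up h(1)] by auto
    next
      case vO: False
      have uv: "u \<noteq> v" using meet_uniq[OF g(1) h(1) gh] u v g h uO by metis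
      have lvO: "ln A v Or = h" using ln_uniq h v vO by auto
      have luO: "ln A u Or = g" using ln_uniq g u uO by auto
      have nO: "Or \<notin> ln A v u"
      proof
        assume a: "Or \<in> ln A v u"
        have "ln A v u = g" using two_pts_eq[of "ln A v u" g Or u] ln[OF vp up] uv a g u uO by auto
        moreover have "ln A v u = h" using two_pts_eq[of "ln A v u" h Or v] ln[OF vp up] uv a h v vO by auto
        ultimately show False using gh by auto
      qed
      have pp: "par A (ln A u v) (ln A v u)" using ln_sym[OF up vp] uv par_refl ln[OF up vp] by auto
      show ?thesis using TA[OF vp up O up vp _ nO uv pp] uv lvO luO by auto
    qed
  qed
qed

lemma cross_trans:
  assumes c: "cross g h Or" and O': "O' \<in> pts A"
  shows "cross (pl A O' g) (pl A O' h) O'"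
proof -
  have g: "g \<in> lns A" "Or \<in> g" and h: "h \<in> lns A" "Or \<in> h" and gh: "g \<noteq> h"
    using c unfolding cross_def by auto
  have "pl A O' g \<noteq> pl A O' h"
  proof
    assume e: "pl A O' g = pl A O' h"
    have "par A g h" using pl[OF O' g(1)] pl[OF O' h(1)] e par_sym par_trans by metis
    then show False using par_meet g h gh by auto
  qed
  then show ?thesis unfolding cross_def using pl[OF O' g(1)] pl[OF O' h(1)] by auto
qed

lemma Pl_trans_sub:
  assumes c: "cross g h Or" and O': "O' \<in> Pl A g h"
  shows "Pl A g h \<subseteq> Pl A (pl A O' g) (pl A O' h)"
proof
  have g: "g \<in> lns A" "Or \<in> g" and h: "h \<in> lns A" "Or \<in> h"
    using c unfolding cross_def by auto
  have O'p: "O' \<in> pts A" using O' Pl_pts by auto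
  obtain v where v: "v \<in> pl A O' g" "v \<in> h" using Pl_K[OF c O'] by auto
  have vp: "v \<in> pts A" using v h line_sub by auto
  fix w assume w: "w \<in> Pl A g h"
  obtain u where wp: "w \<in> pts A" and u: "u \<in> pl A w h" "u \<in> g" using w by (rule PlE)
  have up: "u \<in> pts A" using u g line_sub by auto
  have e1: "pl A w (pl A O' h) = pl A u h" using pl_pl2[OF O'p h(1) wp] pl_pl[OF wp h(1) u(1)] by auto
  have e2: "pl A O' g = pl A v g" using pl_pl[OF O'p g(1) v(1)] by auto
  have "pl A w (pl A O' h) \<inter> pl A O' g \<noteq> {}" using PG[OF c u(2) v(2)] e1 e2 by auto
  then show "w \<in> Pl A (pl A O' g) (pl A O' h)" using wp unfolding Pl_def by auto
qed

lemma Pl_trans: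
  assumes c: "cross g h Or" and O': "O' \<in> Pl A g h"
  shows "Pl A g h = Pl A (pl A O' g) (pl A O' h)"
proof
  show "Pl A g h \<subseteq> Pl A (pl A O' g) (pl A O' h)" using Pl_trans_sub[OF c O'] .
  have g: "g \<in> lns A" "Or \<in> g" and h: "h \<in> lns A" "Or \<in> h"
    using c unfolding cross_def by auto
  have O: "Or \<in> pts A" using c cross_pts by auto
  have O'p: "O' \<in> pts A" using O' Pl_pts by auto
  have c': "cross (pl A O' g) (pl A O' h) O'" using cross_trans[OF c O'p] .
  have e1: "pl A Or (pl A O' g) = g" using pl_pl2[OF O'p g(1) O] pl_self g by auto
  have e2: "pl A Or (pl A O' h) = h" using pl_pl2[OF O'p h(1) O] pl_self h by auto
  have "pl A O' g \<inter> h \<noteq> {}" using Pl_K[OF c O'] .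
  then have "Or \<in> Pl A (pl A O' g) (pl A O' h)" using e2 O unfolding Pl_def by auto
  from Pl_trans_sub[OF c' this] e1 e2
  show "Pl A (pl A O' g) (pl A O' h) \<subseteq> Pl A g h" by simp
qed

lemma Pl_origin:
  assumes c: "cross g h Or" and W: "W \<in> Pl A g h" and WO: "W \<noteq> Or"
  shows "ln A Or W \<subseteq> Pl A g h"
proof -
  have g: "g \<in> lns A" "Or \<in> g" and h: "h \<in> lns A" "Or \<in> h"
    using c unfolding cross_def by auto
  have O: "Or \<in> pts A" using c cross_pts by auto
  have Wp: "W \<in> pts A" using W Pl_pts by auto
  have lOW: "ln A Or W \<in> lns A" "Or \<in> ln A Or W" "W \<in> ln A Or W" using ln[OF O Wp] WO by auto
  show ?thesis
  proof (cases "W \<in> g")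
    case True
    then have "ln A Or W = g" using ln_uniq g WO by auto
    then show ?thesis using g_Pl[OF c] by auto
  next
    case Wg: False
    show ?thesis
    proof (cases "W \<in> h")
      case True
      then have "ln A Or W = h" using ln_uniq h WO by auto
      then show ?thesis using h_Pl[OF c] by auto
    next
      case Wh: False
      obtain u where u: "u \<in> pl A W h" "u \<in> g" using W by (rule PlE)
      have plw: "pl A W h \<in> lns A" "W \<in> pl A W h" "par A (pl A W h) h" using pl Wp h by auto
      have up: "u \<in> pts A" using u g line_sub by auto
      have uO: "u \<noteq> Or"
      proof
        assume "u = Or"
        then have "pl A W h = h" using par_meet plw u h by auto
        then show False using plw Wh by auto
      qed
      have uW: "u \<noteq> W" using u Wg by auto
      have lWu: "ln A W u = pl A W h" using ln_uniq plw u uW by auto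
      have lOu: "ln A Or u = g" using ln_uniq g u uO by auto
      have nu: "u \<notin> ln A W Or"
      proof
        assume "u \<in> ln A W Or"
        then have "u \<in> ln A Or W" using ln_sym[OF Wp O] by auto
        then have "ln A Or W = g" using two_pts_eq[of "ln A Or W" g Or u] lOW g u uO by auto
        then show False using lOW Wg by auto
      qed
      show ?thesis
      proof
        fix x assume x: "x \<in> ln A Or W"
        have xp: "x \<in> pts A" using x lOW line_sub by auto
        show "x \<in> Pl A g h"
        proof (cases "x = Or")
          case True then show ?thesis using g_Pl[OF c] g by auto
        next
          case xO: False
          have e1: "ln A x Or = ln A Or W" using ln_uniq[OF lOW(1) x lOW(2) xO] .
          have e2: "ln A W Or = ln A Or W" using ln_sym[OF Wp O] WO by auto
          have pp: "par A (ln A x Or) (ln A W Or)" using e1 e2 par_refl lOW by auto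
          have "pl A x (ln A W u) \<inter> pl A Or (ln A Or u) \<noteq> {}"
            using TA[OF Wp O up xp O _ nu xO pp] WO by auto
          moreover have "pl A x (ln A W u) = pl A x h" using lWu pl_pl2[OF Wp h(1) xp] by auto
          moreover have "pl A Or (ln A Or u) = g" using lOu pl_self g by auto
          ultimately show ?thesis using xp unfolding Pl_def by auto
        qed
      qed
    qed
  qed
qed

lemma Pl_join:
  assumes c: "cross g h Or" and x: "x \<in> Pl A g h" and y: "y \<in> Pl A g h" and xy: "x \<noteq> y"
  shows "ln A x y \<subseteq> Pl A g h"
proof -
  have xp: "x \<in> pts A" using x Pl_pts by auto
  have e: "Pl A g h = Pl A (pl A x g) (pl A x h)" using Pl_trans[OF c x] .
  have c': "cross (pl A x g) (pl A x h) x" using cross_trans[OF c xp] .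
  show ?thesis using Pl_origin[OF c', of y] y xy e by auto
qed

lemma Pl_ph:
  assumes c: "cross g h Or" and w: "w \<in> Pl A g h"
  shows "pl A w h \<subseteq> Pl A g h"
proof
  have h: "h \<in> lns A" using c unfolding cross_def by auto
  obtain u where wp: "w \<in> pts A" and u: "u \<in> pl A w h" "u \<in> g" using w by (rule PlE)
  fix x assume x: "x \<in> pl A w h"
  have xp: "x \<in> pts A" using x pl[OF wp h] line_sub by auto
  have "pl A x h = pl A w h" using pl_pl[OF wp h x] .
  then show "x \<in> Pl A g h" using xp u by (auto intro: PlI)
qed


lemma Pl_core:
  assumes c: "cross g h Or" and l: "l \<in> lns A" "Or \<in> l" and lP: "l \<subseteq> Pl A g h"
    and lg: "l \<noteq> g" and lh: "l \<noteq> h" and w: "w \<in> Pl A g h" and wg: "w \<notin> g"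
  shows "pl A w l \<inter> g \<noteq> {}"
proof -
  have g: "g \<in> lns A" "Or \<in> g" and h: "h \<in> lns A" "Or \<in> h"
    using c unfolding cross_def by auto
  have O: "Or \<in> pts A" using c cross_pts by auto
  obtain u where wp: "w \<in> pts A" and u: "u \<in> pl A w h" "u \<in> g" using w by (rule PlE)
  have up: "u \<in> pts A" using u g line_sub by auto
  obtain p where p: "p \<in> l" "p \<noteq> Or" using line_two[OF l(1)] by metis
  have pp: "p \<in> pts A" using p l line_sub by auto
  have pP: "p \<in> Pl A g h" using p lP by auto
  obtain q where q: "q \<in> pl A p h" "q \<in> g" using pP by (rule PlE)
  have qp: "q \<in> pts A" using q g line_sub by auto
  have plp: "pl A p h \<in> lns A" "p \<in> pl A p h" "par A (pl A p h) h" using pl pp h by auto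
  have plw: "pl A w h \<in> lns A" "w \<in> pl A w h" "par A (pl A w h) h" using pl wp h by auto
  have pg: "p \<notin> g" using meet_uniq[OF l(1) g(1) lg] p l g by metis
  have pq: "p \<noteq> q" using pg q by auto
  have Onp: "Or \<notin> pl A p h"
  proof
    assume "Or \<in> pl A p h"
    then have "pl A p h = h" using par_meet plp h by auto
    then have "p \<in> h" using plp by auto
    then show False using meet_uniq[OF l(1) h(1) lh] p l h by metis
  qed
  have qO: "q \<noteq> Or" using q Onp by auto
  have lpq: "ln A p q = pl A p h" using ln_uniq plp q pq by auto
  have wu: "w \<noteq> u" using wg u by auto
  have lwu: "ln A w u = pl A w h" using ln_uniq plw u wu by auto
  have ppar: "par A (ln A w u) (ln A p q)" using lwu lpq plw(3) plp(3) par_sym par_trans by metis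
  have "pl A w (ln A p Or) \<inter> pl A u (ln A q Or) \<noteq> {}"
    using TA[OF pp qp O wp up pq _ wu ppar] Onp lpq by auto
  moreover have "ln A p Or = l" using ln_uniq l p by auto
  moreover have "ln A q Or = g" using ln_uniq g q qO by auto
  moreover have "pl A u g = g" using pl_self g u by auto
  ultimately show ?thesis by auto
qed

lemma Pl_par_origin:
  assumes c: "cross g h Or" and l: "l \<in> lns A" "Or \<in> l" and lP: "l \<subseteq> Pl A g h"
    and w: "w \<in> Pl A g h"
  shows "pl A w l \<subseteq> Pl A g h"
proof -
  have g: "g \<in> lns A" "Or \<in> g" and h: "h \<in> lns A" "Or \<in> h" and gh: "g \<noteq> h"
    using c unfolding cross_def by auto
  have wp: "w \<in> pts A" using w Pl_pts by auto
  have plw: "pl A w l \<in> lns A" "w \<in> pl A w l" using pl wp l by auto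
  have sym: "Pl A h g = Pl A g h" using Pl_sym[OF c] by auto
  show ?thesis
  proof (cases "l = h")
    case True then show ?thesis using Pl_ph[OF c w] by auto
  next
    case lh: False
    show ?thesis
    proof (cases "l = g")
      case True then show ?thesis using Pl_ph[OF cross_sym[OF c]] w sym by auto
    next
      case lg: False
      show ?thesis
      proof (cases "w \<in> g")
        case wg: False
        obtain z where z: "z \<in> pl A w l" "z \<in> g" using Pl_core[OF c l lP lg lh w wg] by auto
        have zw: "z \<noteq> w" using z wg by auto
        have "pl A w l = ln A w z" using ln_uniq plw z zw by auto
        then show ?thesis using Pl_join[OF c w _ zw[symmetric]] z g_Pl[OF c] by auto
      next
        case wg: True
        show ?thesis
        proof (cases "w \<in> h")
          case True
          then have "w = Or" using meet_uniq[OF g(1) h(1) gh] wg g h by metis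
          then show ?thesis using pl_self l lP by auto
        next
          case wh: False
          obtain z where z: "z \<in> pl A w l" "z \<in> h"
            using Pl_core[OF cross_sym[OF c] l _ lh lg _ wh] lP w sym by auto
          have zw: "z \<noteq> w" using z wh by auto
          have "pl A w l = ln A w z" using ln_uniq plw z zw by auto
          then show ?thesis using Pl_join[OF c w _ zw[symmetric]] z h_Pl[OF c] by auto
        qed
      qed
    qed
  qed
qed

lemma Pl_par:
  assumes c: "cross g h Or" and l: "l \<in> lns A" and lP: "l \<subseteq> Pl A g h" and w: "w \<in> Pl A g h"
  shows "pl A w l \<subseteq> Pl A g h"
proof -
  obtain x where x: "x \<in> l" using line_two[OF l] by metis
  have xP: "x \<in> Pl A g h" using x lP by auto
  have xp: "x \<in> pts A" using xP Pl_pts by auto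
  have e: "Pl A g h = Pl A (pl A x g) (pl A x h)" using Pl_trans[OF c xP] .
  have c': "cross (pl A x g) (pl A x h) x" using cross_trans[OF c xp] .
  show ?thesis using Pl_par_origin[OF c' l x] lP w e by auto
qed

lemma Pl_subspace:
  assumes c: "cross g h Or"
  shows "subspace A (Pl A g h)"
  unfolding subspace_def
proof (intro conjI allI ballI impI)
  show "Pl A g h \<subseteq> pts A" by (rule Pl_pts)
next
  fix l x y assume l: "l \<in> lns A" and a: "x \<in> l \<and> y \<in> l \<and> x \<in> Pl A g h \<and> y \<in> Pl A g h \<and> x \<noteq> y"
  then have "l = ln A x y" using ln_uniq by auto
  then show "l \<subseteq> Pl A g h" using Pl_join[OF c] a by auto
next
  fix l m assume a: "l \<subseteq> Pl A g h \<and> par A l m \<and> m \<inter> Pl A g h \<noteq> {}"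
  then obtain w where w: "w \<in> m" "w \<in> Pl A g h" by auto
  have lm: "l \<in> lns A" "m \<in> lns A" using a par_lns by auto
  have "m = pl A w l" using pl_uniq[OF lm(2) w(1)] par_sym a by auto
  then show "m \<subseteq> Pl A g h" using Pl_par[OF c lm(1) _ w(2)] a by auto
qed

lemma Pl_exch:
  assumes c: "cross g h Or" and m: "m \<in> lns A" "Or \<in> m" and mP: "m \<subseteq> Pl A g h" and mg: "m \<noteq> g"
  shows "Pl A g m = Pl A g h"
proof -
  have g: "g \<in> lns A" "Or \<in> g" and h: "h \<in> lns A" "Or \<in> h" and gh: "g \<noteq> h"
    using c unfolding cross_def by auto
  have O: "Or \<in> pts A" using c cross_pts by auto
  have cm: "cross g m Or" using g m mg unfolding cross_def by auto
  have sub1: "Pl A g m \<subseteq> Pl A g h"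
  proof
    fix w assume w: "w \<in> Pl A g m"
    obtain u where wp: "w \<in> pts A" and u: "u \<in> pl A w m" "u \<in> g" using w by (rule PlE)
    have "pl A u m = pl A w m" using pl_pl[OF wp m(1) u(1)] .
    moreover have "pl A u m \<subseteq> Pl A g h" using Pl_par[OF c m(1) mP] u g_Pl[OF c] by auto
    ultimately show "w \<in> Pl A g h" using pl[OF wp m(1)] by auto
  qed
  have hP: "h \<subseteq> Pl A g m"
  proof (cases "m = h")
    case True then show ?thesis using h_Pl[OF cm] by auto
  next
    case mh: False
    obtain y where y: "y \<in> m" "y \<noteq> Or" using line_two[OF m(1)] by metis
    have yp: "y \<in> pts A" using y m line_sub by auto
    have yg: "y \<notin> g" using meet_uniq[OF m(1) g(1) mg] y m g by metis
    have yh: "y \<notin> h" using meet_uniq[OF m(1) h(1) mh] y m h by metis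
    obtain u where u: "u \<in> pl A y h" "u \<in> g" using y mP by (blast elim: PlE)
    have up: "u \<in> pts A" using u g line_sub by auto
    have ply: "pl A y h \<in> lns A" "y \<in> pl A y h" "par A (pl A y h) h" using pl yp h by auto
    have Onp: "Or \<notin> pl A y h"
    proof
      assume "Or \<in> pl A y h"
      then have "pl A y h = h" using par_meet ply h by auto
      then show False using ply yh by auto
    qed
    have uO: "u \<noteq> Or" using u Onp by auto
    have yu: "y \<noteq> u" using yg u by auto
    have lyu: "ln A y u = pl A y h" using ln_uniq ply u yu by auto
    show ?thesis
    proof
      fix x assume x: "x \<in> h"
      have xp: "x \<in> pts A" using x h line_sub by auto
      show "x \<in> Pl A g m"
      proof (cases "x = Or")
        case True then show ?thesis using g_Pl[OF cm] g by auto
      next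
        case xO: False
        have lxO: "ln A x Or = h" using ln_uniq h x xO by auto
        have ppar: "par A (ln A x Or) (ln A y u)" using lxO lyu par_sym[OF ply(3)] by auto
        have "pl A x (ln A y Or) \<inter> pl A Or (ln A u Or) \<noteq> {}"
          using TA[OF yp up O xp O yu _ xO ppar] Onp lyu by auto
        moreover have "ln A y Or = m" using ln_uniq m y by auto
        moreover have "ln A u Or = g" using ln_uniq g u uO by auto
        moreover have "pl A Or g = g" using pl_self g by auto
        ultimately show ?thesis using xp unfolding Pl_def by auto
      qed
    qed
  qed
  have sub2: "Pl A g h \<subseteq> Pl A g m"
  proof
    fix w assume w: "w \<in> Pl A g h"
    obtain u where wp: "w \<in> pts A" and u: "u \<in> pl A w h" "u \<in> g" using w by (rule PlE)
    have "pl A u h = pl A w h" using pl_pl[OF wp h(1) u(1)] .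
    moreover have "pl A u h \<subseteq> Pl A g m" using Pl_par[OF cm h(1) hP] u g_Pl[OF cm] by auto
    ultimately show "w \<in> Pl A g m" using pl[OF wp h(1)] by auto
  qed
  show ?thesis using sub1 sub2 by auto
qed

lemma Pl_planar:
  assumes c: "cross g h Or" and m: "m \<in> lns A" and n: "n \<in> lns A"
    and mP: "m \<subseteq> Pl A g h" and nP: "n \<subseteq> Pl A g h" and mn: "m \<inter> n = {}"
  shows "par A m n"
proof -
  obtain w where w: "w \<in> m" using line_two[OF m] by metis
  have wP: "w \<in> Pl A g h" using w mP by auto
  have wp: "w \<in> pts A" using wP Pl_pts by auto
  define n' where "n' = pl A w n"
  have n': "n' \<in> lns A" "w \<in> n'" "par A n' n" using pl[OF wp n] n'_def by auto
  have n'P: "n' \<subseteq> Pl A g h" using Pl_par[OF c n nP wP] n'_def by auto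
  show ?thesis
  proof (cases "n' = m")
    case True then show ?thesis using n' by auto
  next
    case nm: False
    define g' where "g' = pl A w g"
    define h' where "h' = pl A w h"
    have e: "Pl A g h = Pl A g' h'" using Pl_trans[OF c wP] g'_def h'_def by auto
    have c': "cross g' h' w" using cross_trans[OF c wp] g'_def h'_def by auto
    have g': "g' \<in> lns A" "w \<in> g'" using c' unfolding cross_def by auto
    have e2: "Pl A m n' = Pl A g' h'"
    proof (cases "m = g'")
      case True
      then show ?thesis using Pl_exch[OF c' n'(1) n'(2)] n'P e nm by auto
    next
      case False
      have e3: "Pl A g' m = Pl A g' h'" using Pl_exch[OF c' m w] mP e False by auto
      have cgm: "cross g' m w" using g' m w False unfolding cross_def by auto
      have e4: "Pl A m g' = Pl A g' m" using Pl_sym[OF cgm] by auto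
      have cmg: "cross m g' w" using cross_sym[OF cgm] .
      have "Pl A m n' = Pl A m g'" using Pl_exch[OF cmg n'(1) n'(2)] n'P e e3 e4 nm by auto
      then show ?thesis using e3 e4 by auto
    qed
    obtain x where x: "x \<in> n" using line_two[OF n] by metis
    have xp: "x \<in> pts A" using x n line_sub by auto
    have "x \<in> Pl A m n'" using e2 e x nP by auto
    then have "pl A x n' \<inter> m \<noteq> {}" unfolding Pl_def by auto
    moreover have "pl A x n' = n" using pl_pl2[OF wp n xp] n'_def pl_self n x by auto
    ultimately show ?thesis using mn by auto
  qed
qed

lemma noncol:
  assumes "p \<in> pts A" "q \<in> pts A" "r \<in> pts A" "\<not> collinear A p q r" "s \<in> pts A" "s \<noteq> p"
  shows "p \<noteq> q \<and> p \<noteq> r \<and> q \<noteq> r \<and> r \<notin> ln A p q"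
proof -
  have "p \<noteq> q"
  proof
    assume pq: "p = q"
    show False
    proof (cases "r = p")
      case True then show False using assms ln[of p s] pq unfolding collinear_def by metis
    next
      case False then show False using assms ln[of p r] pq unfolding collinear_def by metis
    qed
  qed
  moreover have "p \<noteq> r" using assms ln[of p q] calculation unfolding collinear_def by metis
  moreover have "q \<noteq> r" using assms ln[of p q] calculation unfolding collinear_def by metis
  moreover have "r \<notin> ln A p q" using assms ln[of p q] calculation unfolding collinear_def by metis
  ultimately show ?thesis by auto
qed

lemma Pl_proper:
  assumes d: "dim_ge_3 A" and c: "cross g h Or"
  shows "\<exists>W\<in>pts A. W \<notin> Pl A g h"
proof (rule ccontr)
  assume "\<not> (\<exists>W\<in>pts A. W \<notin> Pl A g h)"
  then have all: "pts A \<subseteq> Pl A g h" by auto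
  obtain p q r s where pqrs: "p \<in> pts A" "q \<in> pts A" "r \<in> pts A" "s \<in> pts A"
    "\<not> collinear A p q r" "s \<notin> span A {p, q, r}"
    using d unfolding dim_ge_3_def by blast
  obtain S where S: "subspace A S" "{p,q,r} \<subseteq> S" "s \<notin> S"
    using pqrs(6) unfolding span_def by blast
  have sp: "s \<noteq> p" using S by auto
  have nc: "p \<noteq> q" "p \<noteq> r" "q \<noteq> r" "r \<notin> ln A p q" using noncol[OF pqrs(1-3,5,4) sp] by auto
  have lpq: "ln A p q \<in> lns A" "p \<in> ln A p q" "q \<in> ln A p q" using ln pqrs nc by auto
  have Sj: "\<And>l x y. l \<in> lns A \<Longrightarrow> x \<in> l \<Longrightarrow> y \<in> l \<Longrightarrow> x \<in> S \<Longrightarrow> y \<in> S \<Longrightarrow> x \<noteq> y \<Longrightarrow> l \<subseteq> S"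
    using S(1) unfolding subspace_def by blast
  have Sp: "\<And>l m. l \<subseteq> S \<Longrightarrow> par A l m \<Longrightarrow> m \<inter> S \<noteq> {} \<Longrightarrow> m \<subseteq> S"
    using S(1) unfolding subspace_def by blast
  have pqS: "ln A p q \<subseteq> S" using Sj[OF lpq] S nc by auto
  have sr: "s \<noteq> r" using S by auto
  have lsr: "ln A s r \<in> lns A" "s \<in> ln A s r" "r \<in> ln A s r" using ln pqrs sr by auto
  show False
  proof (cases "ln A s r \<inter> ln A p q = {}")
    case True
    have "par A (ln A s r) (ln A p q)"
      using Pl_planar[OF c lsr(1) lpq(1)] all lsr lpq line_sub True by blast
    then have "ln A s r \<subseteq> S" using Sp[OF pqS par_sym] lsr S by auto
    then show False using lsr S by auto
  next
    case False
    then obtain u where u: "u \<in> ln A s r" "u \<in> ln A p q" by auto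
    have ur: "u \<noteq> r" using u nc by auto
    have "ln A s r \<subseteq> S" using Sj[OF lsr(1) u(1) lsr(3)] u pqS S ur by auto
    then show False using lsr S by auto
  qed
qed

end

theorem theorem2:
  fixes A :: "'p affine_structure" and A' :: "'q affine_structure"
    and \<phi> :: "'p set \<Rightarrow> 'q set"
  assumes "affine_space A" and "affine_space A'" and "dim_ge_3 A'"
    and "bij_betw \<phi> (lns A) (lns A')"
    and "\<forall>a\<in>lns A. \<forall>b\<in>lns A. a \<inter> b \<noteq> {} \<longrightarrow> \<phi> a \<inter> \<phi> b \<noteq> {}"
  shows "\<exists>lam :: 'p \<Rightarrow> 'q.
           (\<forall>a\<in>lns A. \<forall>b\<in>lns A. \<forall>Q. a \<noteq> b \<and> a \<inter> b = {Q} \<longrightarrow> \<phi> a \<inter> \<phi> b = {lam Q}) \<and>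
           lam ` pts A \<subseteq> pts A' \<and>
           inj_on lam (pts A) \<and>
           (\<forall>x\<in>pts A. \<forall>y\<in>pts A. \<forall>z\<in>pts A.
              collinear A x y z \<longrightarrow> collinear A' (lam x) (lam y) (lam z)) \<and>
           (\<forall>x\<in>pts A. \<forall>y\<in>pts A. \<forall>z\<in>pts A.
              \<not> collinear A x y z \<longrightarrow> \<not> collinear A' (lam x) (lam y) (lam z)) \<and>
           (\<forall>Q\<in>pts A. \<phi> ` star A Q = star A' (lam Q))"
proof -
  interpret a: aff A using assms(1) by unfold_locales
  interpret b: aff A' using assms(2) by unfold_locales
  have inj: "inj_on \<phi> (lns A)" and img: "\<phi> ` lns A = lns A'" using assms(4) unfolding bij_betw_def by auto
  have meet: "\<And>a b. a \<in> lns A \<Longrightarrow> b \<in> lns A \<Longrightarrow> a \<inter> b \<noteq> {} \<Longrightarrow> \<phi> a \<inter> \<phi> b \<noteq> {}"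
    using assms(5) by blast
  have philn: "\<And>l. l \<in> lns A \<Longrightarrow> \<phi> l \<in> lns A'" using img by auto
  have phieq: "\<And>l m. l \<in> lns A \<Longrightarrow> m \<in> lns A \<Longrightarrow> \<phi> l = \<phi> m \<Longrightarrow> l = m"
    using inj unfolding inj_on_def by auto
  have phisurj: "\<And>l'. l' \<in> lns A' \<Longrightarrow> \<exists>l\<in>lns A. l' = \<phi> l" using img by auto
  obtain p0 q0 r0 s0 where pqrs: "p0 \<in> pts A'" "q0 \<in> pts A'" "r0 \<in> pts A'" "s0 \<in> pts A'"
    "\<not> collinear A' p0 q0 r0" "s0 \<notin> span A' {p0, q0, r0}"
    using assms(3) unfolding dim_ge_3_def by blast
  have "s0 \<noteq> p0"
  proof
    assume "s0 = p0"
    moreover have "subspace A' (pts A')" unfolding subspace_def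
    proof (intro conjI allI ballI impI)
      fix l m assume "l \<subseteq> pts A' \<and> par A' l m \<and> m \<inter> pts A' \<noteq> {}"
      then have "m \<in> lns A'" using b.par_lns by auto
      then show "m \<subseteq> pts A'" using b.line_sub by auto
    qed (use b.line_sub in auto)
    ultimately show False using pqrs unfolding span_def by auto
  qed
  then have nc: "p0 \<noteq> q0" "p0 \<noteq> r0" "q0 \<noteq> r0" "r0 \<notin> ln A' p0 q0"
    using b.noncol[OF pqrs(1-3,5,4)] by auto
  have l1: "ln A' p0 q0 \<in> lns A'" "p0 \<in> ln A' p0 q0" "q0 \<in> ln A' p0 q0" using b.ln pqrs nc by auto
  have l2: "ln A' p0 r0 \<in> lns A'" "p0 \<in> ln A' p0 r0" "r0 \<in> ln A' p0 r0" using b.ln pqrs nc by auto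
  have l3: "ln A' q0 r0 \<in> lns A'" "q0 \<in> ln A' q0 r0" "r0 \<in> ln A' q0 r0" using b.ln pqrs nc by auto
  have l12: "ln A' p0 q0 \<noteq> ln A' p0 r0" using l2 nc by auto
  have l13: "ln A' p0 q0 \<noteq> ln A' q0 r0" using l3 nc by auto
  have NC: "\<And>l. l \<in> lns A \<Longrightarrow> \<exists>T\<in>pts A. T \<notin> l"
  proof (rule ccontr)
    fix l assume l: "l \<in> lns A" and "\<not> (\<exists>T\<in>pts A. T \<notin> l)"
    then have pl: "pts A \<subseteq> l" by auto
    have "\<And>m. m \<in> lns A \<Longrightarrow> m = l"
    proof -
      fix m assume m: "m \<in> lns A"
      obtain x y where "x \<in> m" "y \<in> m" "x \<noteq> y" using a.line_two[OF m] by blast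
      then show "m = l" using a.two_pts_eq[OF m l] a.line_sub[OF m] pl by auto
    qed
    then have "lns A = {l}" using l by blast
    then have "lns A' = {\<phi> l}" using img by simp
    then show False using l1(1) l2(1) l12 by blast
  qed
  have lnsne: "lns A \<noteq> {}" using img l1 by auto
  have starne: "\<And>Q. Q \<in> pts A \<Longrightarrow> \<exists>x. x \<in> star A Q"
  proof -
    fix Q assume Q: "Q \<in> pts A"
    obtain l where l: "l \<in> lns A" using lnsne by auto
    obtain x y where xy: "x \<in> l" "y \<in> l" "x \<noteq> y" using a.line_two[OF l] by blast
    have "\<exists>z. z \<in> l \<and> z \<noteq> Q" using xy by blast
    then obtain z where z: "z \<in> l" "z \<noteq> Q" by blast
    have zp: "z \<in> pts A" using z l a.line_sub by blast
    have "ln A Q z \<in> lns A \<and> Q \<in> ln A Q z" using a.ln[OF Q zp] z by blast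
    then show "\<exists>x. x \<in> star A Q" unfolding star_def by blast
  qed
  have conc: "\<And>Q. Q \<in> pts A \<Longrightarrow> \<exists>P. \<forall>x\<in>star A Q. P \<in> \<phi> x"
  proof (rule ccontr)
    fix Q assume Q: "Q \<in> pts A" and H0: "\<not> (\<exists>P. \<forall>x\<in>star A Q. P \<in> \<phi> x)"
    then have H: "\<And>P. \<exists>x\<in>star A Q. P \<notin> \<phi> x" by auto
    have stQ: "\<And>x. x \<in> star A Q \<longleftrightarrow> x \<in> lns A \<and> Q \<in> x" unfolding star_def by auto
    obtain a0 where a0: "a0 \<in> star A Q" using starne[OF Q] by auto
    obtain X0 where X0: "X0 \<in> \<phi> a0" using b.line_two[OF philn] a0 stQ by blast
    obtain bb where bb: "bb \<in> star A Q" "X0 \<notin> \<phi> bb" using H by blast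
    have ab: "\<phi> a0 \<noteq> \<phi> bb" using X0 bb by auto
    obtain X where X: "X \<in> \<phi> a0" "X \<in> \<phi> bb" using meet[of a0 bb] a0 bb stQ by blast
    obtain cc where cc: "cc \<in> star A Q" "X \<notin> \<phi> cc" using H by blast
    obtain Y where Y: "Y \<in> \<phi> a0" "Y \<in> \<phi> cc" using meet[of a0 cc] a0 cc stQ by blast
    obtain Z where Z: "Z \<in> \<phi> bb" "Z \<in> \<phi> cc" using meet[of bb cc] bb cc stQ by blast
    have la: "\<phi> a0 \<in> lns A'" using philn a0 stQ by auto
    have lb: "\<phi> bb \<in> lns A'" using philn bb stQ by auto
    have lc: "\<phi> cc \<in> lns A'" using philn cc stQ by auto
    have cr: "b.cross (\<phi> a0) (\<phi> bb) X" unfolding b.cross_def using la lb ab X by auto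
    define PP where "PP = Pl A' (\<phi> a0) (\<phi> bb)"
    have aP: "\<phi> a0 \<subseteq> PP" using b.g_Pl[OF cr] PP_def by auto
    have bP: "\<phi> bb \<subseteq> PP" using b.h_Pl[OF cr] PP_def by auto
    have YX: "Y \<noteq> X" using Y cc by auto
    have YZ: "Y \<noteq> Z"
    proof
      assume "Y = Z"
      then have "\<phi> a0 = \<phi> bb" using b.two_pts_eq[OF la lb] X Y Z YX by auto
      then show False using ab by auto
    qed
    have cP: "\<phi> cc \<subseteq> PP"
    proof -
      have "ln A' Y Z = \<phi> cc" using b.ln_uniq[OF lc Y(2) Z(2) YZ] .
      then show ?thesis using b.Pl_join[OF cr, of Y Z] YZ Y Z aP bP PP_def by auto
    qed
    have allP: "\<And>x. x \<in> star A Q \<Longrightarrow> \<phi> x \<subseteq> PP"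
    proof -
      fix x assume x: "x \<in> star A Q"
      have lx: "\<phi> x \<in> lns A'" using philn x stQ by auto
      obtain V1 where V1: "V1 \<in> \<phi> x" "V1 \<in> \<phi> a0" using meet[of x a0] x a0 stQ by blast
      obtain V2 where V2: "V2 \<in> \<phi> x" "V2 \<in> \<phi> bb" using meet[of x bb] x bb stQ by blast
      obtain V3 where V3: "V3 \<in> \<phi> x" "V3 \<in> \<phi> cc" using meet[of x cc] x cc stQ by blast
      show "\<phi> x \<subseteq> PP"
      proof (cases "V1 = V2")
        case False
        have "ln A' V1 V2 = \<phi> x" using b.ln_uniq[OF lx V1(1) V2(1) False] .
        then show ?thesis using b.Pl_join[OF cr, of V1 V2] False V1 V2 aP bP PP_def by auto
      next
        case True
        then have "V1 = X" using b.meet_uniq[OF la lb ab] V1 V2 X by auto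
        then have V13: "V1 \<noteq> V3" using V3 cc by auto
        have "ln A' V1 V3 = \<phi> x" using b.ln_uniq[OF lx V1(1) V3(1) V13] .
        then show ?thesis using b.Pl_join[OF cr, of V1 V3] V13 V1 V3 aP cP PP_def by auto
      qed
    qed
    obtain W where W: "W \<in> pts A'" "W \<notin> PP" using b.Pl_proper[OF assms(3) cr] PP_def by auto
    define k where "k = pl A' W (\<phi> a0)"
    have k: "k \<in> lns A'" "W \<in> k" "par A' k (\<phi> a0)" using b.pl[OF W(1) la] k_def by auto
    obtain l where l: "l \<in> lns A" "k = \<phi> l" using phisurj[OF k(1)] by auto
    obtain x where x: "x \<in> star A Q" "l \<inter> x \<noteq> {}"
    proof (cases "Q \<in> l")
      case True
      then show ?thesis using that[of l] l stQ by auto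
    next
      case False
      obtain y where y: "y \<in> l" using a.line_two[OF l(1)] by blast
      have yp: "y \<in> pts A" using y l a.line_sub by auto
      have yQ: "Q \<noteq> y" using y False by auto
      show ?thesis using that[of "ln A Q y"] a.ln[OF Q yp yQ] y stQ by auto
    qed
    obtain V where V: "V \<in> k" "V \<in> \<phi> x" using meet[of l x] l x stQ by blast
    have VP: "V \<in> PP" using V allP[OF x(1)] by auto
    have "k = pl A' V (\<phi> a0)" using b.pl_uniq[OF k(1) V(1) k(3)] by auto
    then have "k \<subseteq> PP" using b.Pl_par[OF cr la] aP VP PP_def by auto
    then show False using k W by auto
  qed
  define lam where "lam Q = (SOME P. \<forall>x\<in>star A Q. P \<in> \<phi> x)" for Q
  have LAM: "\<And>Q x. Q \<in> pts A \<Longrightarrow> x \<in> lns A \<Longrightarrow> Q \<in> x \<Longrightarrow> lam Q \<in> \<phi> x"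
  proof -
    fix Q x assume Q: "Q \<in> pts A" and x: "x \<in> lns A" "Q \<in> x"
    have "\<forall>x\<in>star A Q. lam Q \<in> \<phi> x" unfolding lam_def using someI_ex[OF conc[OF Q]] .
    then show "lam Q \<in> \<phi> x" using x unfolding star_def by auto
  qed
  have C: "\<And>Q R T. Q \<in> pts A \<Longrightarrow> R \<in> pts A \<Longrightarrow> T \<in> pts A \<Longrightarrow> Q \<noteq> R \<Longrightarrow> T \<notin> ln A Q R
      \<Longrightarrow> lam Q = lam R \<Longrightarrow> lam T = lam Q"
  proof (rule ccontr)
    fix Q R T assume Q: "Q \<in> pts A" and R: "R \<in> pts A" and T: "T \<in> pts A" and QR: "Q \<noteq> R"
      and TQR: "T \<notin> ln A Q R" and e: "lam Q = lam R" and ne: "lam T \<noteq> lam Q"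
    have lQR: "ln A Q R \<in> lns A" "Q \<in> ln A Q R" "R \<in> ln A Q R" using a.ln[OF Q R QR] by auto
    have TQ: "T \<noteq> Q" and TR: "T \<noteq> R" using TQR lQR by auto
    have lTQ: "ln A T Q \<in> lns A" "T \<in> ln A T Q" "Q \<in> ln A T Q" using a.ln[OF T Q TQ] by auto
    have lTR: "ln A T R \<in> lns A" "T \<in> ln A T R" "R \<in> ln A T R" using a.ln[OF T R TR] by auto
    have "\<phi> (ln A T Q) = \<phi> (ln A T R)"
      using b.two_pts_eq[OF philn[OF lTQ(1)] philn[OF lTR(1)], of "lam T" "lam Q"]
        LAM[OF T lTQ(1,2)] LAM[OF Q lTQ(1,3)] LAM[OF T lTR(1,2)] LAM[OF R lTR(1,3)] e ne by auto
    then have "ln A T Q = ln A T R" using phieq lTQ lTR by auto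
    then have "ln A Q R = ln A T Q" using a.ln_uniq[OF lTQ(1) lTQ(3) _ QR] lTR by auto
    then show False using TQR lTQ by auto
  qed
  have Inj: "\<And>Q R. Q \<in> pts A \<Longrightarrow> R \<in> pts A \<Longrightarrow> Q \<noteq> R \<Longrightarrow> lam Q \<noteq> lam R"
  proof
    fix Q R assume Q: "Q \<in> pts A" and R: "R \<in> pts A" and QR: "Q \<noteq> R" and e: "lam Q = lam R"
    have lQR: "ln A Q R \<in> lns A" "Q \<in> ln A Q R" "R \<in> ln A Q R" using a.ln[OF Q R QR] by auto
    obtain T0 where T0: "T0 \<in> pts A" "T0 \<notin> ln A Q R" using NC[OF lQR(1)] by auto
    have eT0: "lam T0 = lam Q" using C[OF Q R T0(1) QR T0(2) e] .
    have QT0: "Q \<noteq> T0" using T0 lQR by auto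
    have all: "\<And>T. T \<in> pts A \<Longrightarrow> lam T = lam Q"
    proof -
      fix T assume T: "T \<in> pts A"
      show "lam T = lam Q"
      proof (cases "T \<in> ln A Q R")
        case False then show ?thesis using C[OF Q R T QR _ e] by auto
      next
        case TI: True
        show ?thesis
        proof (cases "T = Q")
          case True then show ?thesis by auto
        next
          case TQ: False
          have lQT0: "ln A Q T0 \<in> lns A" "Q \<in> ln A Q T0" "T0 \<in> ln A Q T0" using a.ln[OF Q T0(1) QT0] by auto
          have "T \<notin> ln A Q T0"
          proof
            assume "T \<in> ln A Q T0"
            then have "ln A Q T0 = ln A Q R" using a.two_pts_eq[OF lQT0(1) lQR(1) lQT0(2) _ lQR(2) TI] TQ by auto
            then show False using lQT0 T0 by auto
          qed
          then show ?thesis using C[OF Q T0(1) T QT0 _ eT0[symmetric]] by auto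
        qed
      qed
    qed
    have onall: "\<And>l'. l' \<in> lns A' \<Longrightarrow> lam Q \<in> l'"
    proof -
      fix l' assume l': "l' \<in> lns A'"
      obtain l where l: "l \<in> lns A" "l' = \<phi> l" using phisurj[OF l'] by auto
      obtain x where x: "x \<in> l" using a.line_two[OF l(1)] by blast
      have xp: "x \<in> pts A" using x l a.line_sub by auto
      show "lam Q \<in> l'" using LAM[OF xp l(1) x] all[OF xp] l by auto
    qed
    have "lam Q = p0" using b.meet_uniq[OF l1(1) l2(1) l12] onall[OF l1(1)] onall[OF l2(1)] l1 l2 by metis
    moreover have "lam Q = q0" using b.meet_uniq[OF l1(1) l3(1) l13] onall[OF l1(1)] onall[OF l3(1)] l1 l3 by metis
    ultimately show False using nc by auto
  qed
  have Star: "\<And>Q. Q \<in> pts A \<Longrightarrow> \<phi> ` star A Q = star A' (lam Q)"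
  proof
    fix Q assume Q: "Q \<in> pts A"
    show "\<phi> ` star A Q \<subseteq> star A' (lam Q)"
      using LAM[OF Q] philn unfolding star_def by auto
    show "star A' (lam Q) \<subseteq> \<phi> ` star A Q"
    proof
      fix l' assume "l' \<in> star A' (lam Q)"
      then have l': "l' \<in> lns A'" "lam Q \<in> l'" unfolding star_def by auto
      obtain l where l: "l \<in> lns A" "l' = \<phi> l" using phisurj[OF l'(1)] by auto
      have "Q \<in> l"
      proof (rule ccontr)
        assume Ql: "Q \<notin> l"
        obtain y where y: "y \<in> l" using a.line_two[OF l(1)] by blast
        have yp: "y \<in> pts A" using y l a.line_sub by auto
        have yQ: "Q \<noteq> y" using y Ql by auto
        have m: "ln A Q y \<in> lns A" "Q \<in> ln A Q y" "y \<in> ln A Q y" using a.ln[OF Q yp yQ] by auto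
        have "\<phi> (ln A Q y) = \<phi> l"
          using b.two_pts_eq[OF philn[OF m(1)] philn[OF l(1)], of "lam Q" "lam y"]
            LAM[OF Q m(1,2)] LAM[OF yp m(1,3)] LAM[OF yp l(1) y] l' l Inj[OF Q yp yQ] by auto
        then have "ln A Q y = l" using phieq m l by auto
        then show False using m Ql by auto
      qed
      then show "l' \<in> \<phi> ` star A Q" using l unfolding star_def by auto
    qed
  qed
  show ?thesis
  proof (rule exI[of _ lam], intro conjI)
    show "\<forall>a\<in>lns A. \<forall>b\<in>lns A. \<forall>Q. a \<noteq> b \<and> a \<inter> b = {Q} \<longrightarrow> \<phi> a \<inter> \<phi> b = {lam Q}"
    proof (intro ballI allI impI)
      fix a b Q assume a: "a \<in> lns A" and b: "b \<in> lns A" and h: "a \<noteq> b \<and> a \<inter> b = {Q}"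
      have Qp: "Q \<in> pts A" using h a a.line_sub by auto
      have ia: "lam Q \<in> \<phi> a" using LAM[OF Qp a] h by auto
      have ib: "lam Q \<in> \<phi> b" using LAM[OF Qp b] h by auto
      have ab: "\<phi> a \<noteq> \<phi> b" using phieq a b h by auto
      show "\<phi> a \<inter> \<phi> b = {lam Q}"
        using b.meet_uniq[OF philn[OF a] philn[OF b] ab] ia ib by blast
    qed
    show "lam ` pts A \<subseteq> pts A'"
    proof
      fix P assume "P \<in> lam ` pts A"
      then obtain Q where Q: "Q \<in> pts A" "P = lam Q" by auto
      obtain x where x: "x \<in> star A Q" using starne[OF Q(1)] by auto
      have "lam Q \<in> \<phi> x" using LAM[OF Q(1)] x unfolding star_def by auto
      then show "P \<in> pts A'" using b.line_sub philn x Q unfolding star_def by auto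
    qed
    show "inj_on lam (pts A)" using Inj unfolding inj_on_def by auto
    show "\<forall>x\<in>pts A. \<forall>y\<in>pts A. \<forall>z\<in>pts A. collinear A x y z \<longrightarrow> collinear A' (lam x) (lam y) (lam z)"
    proof (intro ballI impI)
      fix x y z assume x: "x \<in> pts A" and y: "y \<in> pts A" and z: "z \<in> pts A" and "collinear A x y z"
      then obtain l where l: "l \<in> lns A" "x \<in> l" "y \<in> l" "z \<in> l" unfolding collinear_def by auto
      show "collinear A' (lam x) (lam y) (lam z)" unfolding collinear_def
        using philn[OF l(1)] LAM[OF x l(1,2)] LAM[OF y l(1,3)] LAM[OF z l(1,4)] by auto
    qed
    show "\<forall>x\<in>pts A. \<forall>y\<in>pts A. \<forall>z\<in>pts A. \<not> collinear A x y z \<longrightarrow> \<not> collinear A' (lam x) (lam y) (lam z)"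
    proof (intro ballI impI notI)
      fix x y z assume x: "x \<in> pts A" and y: "y \<in> pts A" and z: "z \<in> pts A"
        and nc: "\<not> collinear A x y z" and c: "collinear A' (lam x) (lam y) (lam z)"
      obtain l' where l': "l' \<in> lns A'" "lam x \<in> l'" "lam y \<in> l'" "lam z \<in> l'"
        using c unfolding collinear_def by auto
      obtain l where l: "l \<in> lns A" "l' = \<phi> l" using phisurj[OF l'(1)] by auto
      have mem: "\<And>w. w \<in> pts A \<Longrightarrow> lam w \<in> l' \<Longrightarrow> w \<in> l"
      proof -
        fix w assume w: "w \<in> pts A" and lw: "lam w \<in> l'"
        have "l' \<in> star A' (lam w)" using l' lw unfolding star_def by auto
        then have "l' \<in> \<phi> ` star A w" using Star[OF w] by auto
        then obtain m where m: "m \<in> star A w" "l' = \<phi> m" by auto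
        have "m = l" using phieq m l unfolding star_def by auto
        then show "w \<in> l" using m unfolding star_def by auto
      qed
      have "collinear A x y z" unfolding collinear_def
        using l(1) mem[OF x l'(2)] mem[OF y l'(3)] mem[OF z l'(4)] by auto
      then show False using nc by auto
    qed
    show "\<forall>Q\<in>pts A. \<phi> ` star A Q = star A' (lam Q)" using Star by auto
  qed
qed

end
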